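(* Let $N=\{1,\dots,n\}$ with $n\ge 2$ and $\mathcal{D}=\mathbb{R}^n_+$. A rule $R:\mathcal{D}\to\mathbb{R}^n_+$ satisfies scale invariance, downstream impartiality, upstream invariance, and equal treatment of equal source inflows if and only if it is a compromise rule, i.e. there exists $\lambda\in[0,1]$ such that for each $e\in\mathcal{D}$, $R(e)=\lambda R^{NT}(e)+(1-\lambda)R^{EFT}(e)$.
   Context: Agents $1,\dots,n$ are located along a linear river, lower index meaning more upstream; agent $i$ has river inflow $e_i\ge 0$, and $e=(e_1,\dots,e_n)\in\mathcal{D}=\mathbb{R}^n_+$. An allocation for $e$ is $x\in\mathbb{R}^n_+$ with $\sum_{i=1}^n x_i=\sum_{i=1}^n e_i$ and $\sum_{i=1}^k x_i\le\sum_{i=1}^k e_i$ for each $k=1,\dots,n-1$. A rule is a map $R:\mathcal{D}\to\mathbb{R}^n_+$ assigning to each $e$ an allocation $R(e)$ for $e$. No-transfer rule: $R^{NT}_i(e)=e_i$ for all $i$. Egalitarian full-transfer rule: $R^{EFT}_i(e)=\sum_{j<i}\frac{e_j}{n-j}$ for $i=1,\dots,n-1$ (so $R^{EFT}_1(e)=0$), and $R^{EFT}_n(e)=\sum_{j<n}\frac{e_j}{n-j}+e_n$. For $e\in\mathcal{D}$ with $e_k>0$ for some $k\le n-1$, its source is $s(e)=\min\{k\in\{1,\dots,n-1\}:e_k>0\}$. Axioms: Scale invariance: for each $e\in\mathcal{D}$ and each $\gamma\in\mathbb{R}_+$, $R(\gamma e)=\gamma R(e)$. Upstream invariance: for each $e,e'\in\mathcal{D}$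 such that $e_i<e'_i$ for some $i\in N$ and $e_j=e'_j$ for all $j\ne i$, we have $R_k(e)=R_k(e')$ for each $k<i$. Downstream impartiality: for each $e,e'\in\mathcal{D}$ such that $e_i<e'_i$ for some $i\in N$ and $e_j=e'_j$ for all $j\ne i$, and for each $k,l>i$ with $e_k=e_l$, we have $R_k(e')-R_k(e)=R_l(e')-R_l(e)$. Equal treatment of equal source inflows: for each $e,e'\in\mathcal{D}$ (with sources defined) such that $e_{s(e)}=e'_{s(e')}$, $R_{s(e)}(e)=R_{s(e')}(e')$. *)

theory Defs
  imports Main Complex_Main
begin

text \<open>Agents are 1..n; an inflow profile is a function nat => real that is
nonnegative on {1..n} and zero outside (canonical representation of R^n_+).\<close>

definition dom_D :: "nat \<Rightarrow> (nat \<Rightarrow> real) set" where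
  "dom_D n = {e. (\<forall>i\<in>{1..n}. 0 \<le> e i) \<and> (\<forall>i. i \<notin> {1..n} \<longrightarrow> e i = 0)}"

definition is_allocation :: "nat \<Rightarrow> (nat \<Rightarrow> real) \<Rightarrow> (nat \<Rightarrow> real) \<Rightarrow> bool" where
  "is_allocation n e x \<longleftrightarrow>
     (\<forall>i\<in>{1..n}. 0 \<le> x i) \<and>
     (\<Sum>i=1..n. x i) = (\<Sum>i=1..n. e i) \<and>
     (\<forall>k\<in>{1..n-1}. (\<Sum>i=1..k. x i) \<le> (\<Sum>i=1..k. e i))"

definition is_rule :: "nat \<Rightarrow> ((nat \<Rightarrow> real) \<Rightarrow> (nat \<Rightarrow> real)) \<Rightarrow> bool" where
  "is_rule n R \<longleftrightarrow> (\<forall>e\<in>dom_D n. is_allocation n e (R e))"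

definition R_NT :: "(nat \<Rightarrow> real) \<Rightarrow> nat \<Rightarrow> real" where
  "R_NT e i = e i"

definition R_EFT :: "nat \<Rightarrow> (nat \<Rightarrow> real) \<Rightarrow> nat \<Rightarrow> real" where
  "R_EFT n e i = (\<Sum>j\<in>{1..<i}. e j / (real n - real j)) + (if i = n then e n else 0)"

definition has_source :: "nat \<Rightarrow> (nat \<Rightarrow> real) \<Rightarrow> bool" where
  "has_source n e \<longleftrightarrow> (\<exists>k\<in>{1..n-1}. 0 < e k)"

definition source :: "nat \<Rightarrow> (nat \<Rightarrow> real) \<Rightarrow> nat" where
  "source n e = (LEAST k. k \<in> {1..n-1} \<and> 0 < e k)"

definition scale_invariant :: "nat \<Rightarrow> ((nat \<Rightarrow> real) \<Rightarrow> (nat \<Rightarrow> real)) \<Rightarrow> bool" where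
  "scale_invariant n R \<longleftrightarrow>
     (\<forall>e\<in>dom_D n. \<forall>\<gamma>::real. 0 \<le> \<gamma> \<longrightarrow>
        (\<forall>k\<in>{1..n}. R (\<lambda>i. \<gamma> * e i) k = \<gamma> * R e k))"

definition upstream_invariant :: "nat \<Rightarrow> ((nat \<Rightarrow> real) \<Rightarrow> (nat \<Rightarrow> real)) \<Rightarrow> bool" where
  "upstream_invariant n R \<longleftrightarrow>
     (\<forall>e\<in>dom_D n. \<forall>e'\<in>dom_D n. \<forall>i\<in>{1..n}.
        e i < e' i \<and> (\<forall>j\<in>{1..n}. j \<noteq> i \<longrightarrow> e j = e' j) \<longrightarrow>
        (\<forall>k\<in>{1..n}. k < i \<longrightarrow> R e k = R e' k))"

definition downstream_impartial :: "nat \<Rightarrow> ((nat \<Rightarrow> real) \<Rightarrow> (nat \<Rightarrow> real)) \<Rightarrow> bool" where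
  "downstream_impartial n R \<longleftrightarrow>
     (\<forall>e\<in>dom_D n. \<forall>e'\<in>dom_D n. \<forall>i\<in>{1..n}.
        e i < e' i \<and> (\<forall>j\<in>{1..n}. j \<noteq> i \<longrightarrow> e j = e' j) \<longrightarrow>
        (\<forall>k\<in>{1..n}. \<forall>l\<in>{1..n}. i < k \<and> i < l \<and> e k = e l \<longrightarrow>
            R e' k - R e k = R e' l - R e l))"

definition equal_treatment_source :: "nat \<Rightarrow> ((nat \<Rightarrow> real) \<Rightarrow> (nat \<Rightarrow> real)) \<Rightarrow> bool" where
  "equal_treatment_source n R \<longleftrightarrow>
     (\<forall>e\<in>dom_D n. \<forall>e'\<in>dom_D n. has_source n e \<and> has_source n e' \<and>
        e (source n e) = e' (source n e') \<longrightarrow>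
        R e (source n e) = R e' (source n e'))"

definition compromise_rule :: "nat \<Rightarrow> ((nat \<Rightarrow> real) \<Rightarrow> (nat \<Rightarrow> real)) \<Rightarrow> bool" where
  "compromise_rule n R \<longleftrightarrow>
     (\<exists>lam::real. 0 \<le> lam \<and> lam \<le> 1 \<and>
        (\<forall>e\<in>dom_D n. \<forall>i\<in>{1..n}. R e i = lam * R_NT e i + (1 - lam) * R_EFT n e i))"

end

theory Submission imports Defs begin

lemma swap_sum: "(\<Sum>i=1..m. \<Sum>j\<in>{1..<i}. f j) = (\<Sum>j\<in>{1..<m}. real (m - j) * (f j :: real))"
proof (induction m)
  case 0 then show ?case by simp
next
  case (Suc m)
  have "(\<Sum>j\<in>{1..<Suc m}. real (Suc m - j) * f j) = (\<Sum>j\<in>{1..<Suc m}. real (m - j) * f j + f j)"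
    by (rule sum.cong) (auto simp: Suc_diff_le algebra_simps)
  also have "\<dots> = (\<Sum>j\<in>{1..<Suc m}. real (m - j) * f j) + (\<Sum>j\<in>{1..<Suc m}. f j)"
    by (simp add: sum.distrib)
  also have "(\<Sum>j\<in>{1..<Suc m}. real (m - j) * f j) = (\<Sum>j\<in>{1..<m}. real (m - j) * f j)"
    by (cases "m = 0") (simp_all add: sum.atLeastLessThan_Suc)
  finally show ?case using Suc by (simp add: sum.atLeast_Suc_atMost_Suc_shift[symmetric] )
qed

definition Cr :: "nat \<Rightarrow> real \<Rightarrow> (nat \<Rightarrow> real) \<Rightarrow> nat \<Rightarrow> real" where
  "Cr n lam e i = lam * R_NT e i + (1 - lam) * R_EFT n e i"

lemma dom_zero: "e \<in> dom_D n \<Longrightarrow> i \<notin> {1..n} \<Longrightarrow> e i = 0"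
  by (simp add: dom_D_def)

lemma dom_nonneg: "e \<in> dom_D n \<Longrightarrow> 0 \<le> e i"
  unfolding dom_D_def by (cases "i \<in> {1..n}") auto

lemma dom_ext: "e \<in> dom_D n \<Longrightarrow> e' \<in> dom_D n \<Longrightarrow> \<forall>j\<in>{1..n}. e j = e' j \<Longrightarrow> e = e'"
  by (rule ext, metis dom_zero)

lemma EFT_sum: assumes "1 \<le> n" shows "(\<Sum>i=1..n. R_EFT n e i) = (\<Sum>i=1..n. e i)"
proof -
  have "(\<Sum>i=1..n. R_EFT n e i) = (\<Sum>i=1..n. \<Sum>j\<in>{1..<i}. e j / (real n - real j)) + e n"
    using assms by (simp add: R_EFT_def sum.distrib)
  also have "(\<Sum>i=1..n. \<Sum>j\<in>{1..<i}. e j / (real n - real j)) = (\<Sum>j\<in>{1..<n}. real (n - j) * (e j / (real n - real j)))"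
    by (rule swap_sum)
  also have "\<dots> = (\<Sum>j\<in>{1..<n}. e j)"
    by (rule sum.cong) (auto simp: of_nat_diff)
  finally show ?thesis using assms
    by (metis Suc_le_D atLeastLessThanSuc_atLeastAtMost sum.atLeastLessThan_Suc diff_Suc_1 le_add1 plus_1_eq_Suc)
qed

lemma C_sum: "1 \<le> n \<Longrightarrow> (\<Sum>i=1..n. Cr n lam e i) = (\<Sum>i=1..n. e i)"
proof -
  assume n: "1 \<le> n"
  have "(\<Sum>i=1..n. Cr n lam e i) = lam * (\<Sum>i=1..n. e i) + (1 - lam) * (\<Sum>i=1..n. R_EFT n e i)"
    by (simp add: Cr_def R_NT_def sum.distrib sum_distrib_left)
  then show ?thesis using EFT_sum[OF n] by (simp add: algebra_simps)
qed

lemma C_upstream: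
  assumes "k \<in> {1..n}" "k < i" "i \<le> n" "\<forall>j\<in>{1..n}. j \<noteq> i \<longrightarrow> e j = e' j"
  shows "Cr n lam e k = Cr n lam e' k"
proof -
  have "R_EFT n e k = R_EFT n e' k"
    unfolding R_EFT_def using assms by (auto intro!: sum.cong)
  moreover have "e k = e' k" using assms by auto
  ultimately show ?thesis by (simp add: Cr_def R_NT_def)
qed

lemma C_DI:
  assumes "i \<in> {1..n}" "k \<in> {1..n}" "i < k" "\<forall>j\<in>{1..n}. j \<noteq> i \<longrightarrow> e j = e' j"
  shows "Cr n lam e' k - Cr n lam e k = (1 - lam) * ((e' i - e i) / (real n - real i))"
proof -
  have ek: "e' k = e k" "e' n = e n" using assms by auto
  have "(\<Sum>j\<in>{1..<k}. e' j / (real n - real j)) - (\<Sum>j\<in>{1..<k}. e j / (real n - real j))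
      = (\<Sum>j\<in>{1..<k}. e' j / (real n - real j) - e j / (real n - real j))"
    by (simp add: sum_subtractf)
  also have "\<dots> = (\<Sum>j\<in>{1..<k}. if j = i then (e' i - e i) / (real n - real i) else 0)"
    using assms by (intro sum.cong) (auto simp: diff_divide_distrib)
  also have "\<dots> = (e' i - e i) / (real n - real i)"
    using assms by simp
  finally have "R_EFT n e' k - R_EFT n e k = (e' i - e i) / (real n - real i)"
    unfolding R_EFT_def using ek by auto
  then show ?thesis using ek by (simp add: Cr_def R_NT_def algebra_simps)
qed

lemma source_props:
  assumes "has_source n e" "e \<in> dom_D n"
  shows "source n e \<in> {1..n-1} \<and> 0 < e (source n e) \<and> (\<forall>j\<in>{1..<source n e}. e j = 0)"
proof -
  obtain k where k: "k \<in> {1..n-1}" "0 < e k" using assms(1) has_source_def by blast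
  have s: "source n e \<in> {1..n-1} \<and> 0 < e (source n e)"
    unfolding source_def by (rule LeastI[of _ k]) (use k in auto)
  have "\<forall>j\<in>{1..<source n e}. e j = 0"
  proof
    fix j assume j: "j \<in> {1..<source n e}"
    then have "\<not> (j \<in> {1..n-1} \<and> 0 < e j)"
      unfolding source_def using not_less_Least by auto
    moreover have "j \<in> {1..n-1}" using j s by auto
    ultimately show "e j = 0" using dom_nonneg[OF assms(2), of j] by auto
  qed
  with s show ?thesis by blast
qed

lemma source_eq:
  assumes "k \<in> {1..n-1}" "0 < e k" "\<forall>j\<in>{1..<k}. e j = 0"
  shows "has_source n e \<and> source n e = k"
proof
  show "has_source n e" using assms has_source_def by blast
  show "source n e = k" unfolding source_def
  proof (rule Least_equality)
    show "k \<in> {1..n-1} \<and> 0 < e k" using assms by auto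
    fix y assume "y \<in> {1..n-1} \<and> 0 < e y"
    then show "k \<le> y" using assms(3) by (metis atLeastLessThan_iff atLeastAtMost_iff not_le_imp_less order_less_irrefl)
  qed
qed

lemma C_source:
  assumes "e \<in> dom_D n" "has_source n e"
  shows "Cr n lam e (source n e) = lam * e (source n e)"
proof -
  have p: "source n e \<in> {1..n-1}" "\<forall>j\<in>{1..<source n e}. e j = 0"
    using source_props[OF assms(2,1)] by auto
  then have "R_EFT n e (source n e) = 0" unfolding R_EFT_def by auto
  then show ?thesis by (simp add: Cr_def R_NT_def)
qed


lemma C_scale: "Cr n lam (\<lambda>i. g * e i) k = g * Cr n lam e k"
  by (simp add: Cr_def R_NT_def R_EFT_def sum_distrib_left algebra_simps)

lemma scale_dom: "e \<in> dom_D n \<Longrightarrow> 0 \<le> (g::real) \<Longrightarrow> (\<lambda>i. g * e i) \<in> dom_D n"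
  by (simp add: dom_D_def)

lemma chain:
  fixes Q :: "(nat \<Rightarrow> real) \<Rightarrow> real"
  assumes "finite S"
  shows "A \<subseteq> dom_D n \<Longrightarrow> S \<subseteq> {1..n} \<Longrightarrow>
    (\<And>p p' x. p \<in> A \<Longrightarrow> p' \<in> A \<Longrightarrow> x \<in> S \<Longrightarrow> p(x := p' x) \<in> A) \<Longrightarrow>
    (\<And>p p' x. p \<in> A \<Longrightarrow> p' \<in> A \<Longrightarrow> x \<in> S \<Longrightarrow> (\<forall>j\<in>{1..n}. j \<noteq> x \<longrightarrow> p j = p' j) \<Longrightarrow> Q p = Q p') \<Longrightarrow>
    p \<in> A \<Longrightarrow> p' \<in> A \<Longrightarrow> (\<forall>j\<in>{1..n}. j \<notin> S \<longrightarrow> p j = p' j) \<Longrightarrow> Q p = Q p'"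
  using assms
proof (induction S arbitrary: p rule: finite_induct)
  case empty
  then have "p = p'" using dom_ext[of p n p'] by blast
  then show ?case by simp
next
  case (insert x S)
  define p'' where "p'' = p(x := p' x)"
  have p'': "p'' \<in> A" unfolding p''_def using insert.prems by blast
  have "Q p = Q p''"
  proof (rule insert.prems(4))
    show "p \<in> A" "p'' \<in> A" "x \<in> insert x S" using p'' insert.prems by auto
    show "\<forall>j\<in>{1..n}. j \<noteq> x \<longrightarrow> p j = p'' j" unfolding p''_def by auto
  qed
  also have "Q p'' = Q p'"
  proof (rule insert.IH)
    show "A \<subseteq> dom_D n" "S \<subseteq> {1..n}" "p'' \<in> A" "p' \<in> A" using insert.prems p'' by auto
    show "\<And>p p' x. p \<in> A \<Longrightarrow> p' \<in> A \<Longrightarrow> x \<in> S \<Longrightarrow> p(x := p' x) \<in> A"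
      using insert.prems(3) by blast
    show "\<And>p p' y. p \<in> A \<Longrightarrow> p' \<in> A \<Longrightarrow> y \<in> S \<Longrightarrow> (\<forall>j\<in>{1..n}. j \<noteq> y \<longrightarrow> p j = p' j) \<Longrightarrow> Q p = Q p'"
      using insert.prems(4) by blast
    show "\<forall>j\<in>{1..n}. j \<notin> S \<longrightarrow> p'' j = p' j"
      using insert.prems(7) unfolding p''_def by auto
  qed
  finally show ?case .
qed


lemma split_sum: "1 \<le> (k::nat) \<Longrightarrow> k \<le> n \<Longrightarrow> (\<Sum>i=1..n. f i) = (\<Sum>i\<in>{1..<k}. f i) + (\<Sum>i=k..n. (f i :: real))"
proof -
  assume "1 \<le> k" "k \<le> n"
  then have "{1..n} = {1..<k} \<union> {k..n}" by auto
  then show ?thesis by (simp add: sum.union_disjoint ivl_disj_int)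
qed

lemma step_lemma:
  assumes n: "2 \<le> n" and rule: "is_rule n R" and DI: "downstream_impartial n R"
  and k: "k \<in> {1..n-1}"
  and IH: "\<forall>j\<in>{1..<k}. \<forall>e\<in>dom_D n. R e j = Cr n lam e j"
  and p: "p \<in> dom_D n" "p' \<in> dom_D n" "\<forall>j\<in>{k..n}. p j = c" "\<forall>j\<in>{k..n}. p' j = c"
  and x: "x \<in> {1..<k}" "p x < p' x" "\<forall>j\<in>{1..n}. j \<noteq> x \<longrightarrow> p j = p' j"
  shows "R p k - Cr n lam p k = R p' k - Cr n lam p' k"
proof -
  define \<delta> where "\<delta> = (R p' k - Cr n lam p' k) - (R p k - Cr n lam p k)"
  have xn: "x \<in> {1..n}" using x k by auto
  have dl: "(R p' l - Cr n lam p' l) - (R p l - Cr n lam p l) = \<delta>" if l: "l \<in> {k..n}" for l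
  proof -
    have "R p' k - R p k = R p' l - R p l"
    proof -
      have D: "\<forall>k\<in>{1..n}. \<forall>l\<in>{1..n}. x < k \<and> x < l \<and> p k = p l \<longrightarrow> R p' k - R p k = R p' l - R p l"
        using DI p(1,2) xn x(2,3) unfolding downstream_impartial_def by blast
      have "k \<in> {1..n}" "l \<in> {1..n}" "x < k" "x < l" "p k = p l" using k l x p by auto
      then show ?thesis using D by blast
    qed
    moreover have "Cr n lam p' l - Cr n lam p l = Cr n lam p' k - Cr n lam p k"
      using C_DI[OF xn, of l p p' lam] C_DI[OF xn, of k p p' lam] x l k xn by auto
    ultimately show ?thesis unfolding \<delta>_def by simp
  qed
  have sR: "(\<Sum>i=1..n. R q i) = (\<Sum>i=1..n. q i)" if "q \<in> dom_D n" for q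
    using rule that unfolding is_rule_def is_allocation_def by blast
  have sC: "(\<Sum>i=1..n. Cr n lam q i) = (\<Sum>i=1..n. q i)" for q
    using C_sum n by simp
  have "(\<Sum>i=1..n. (R p' i - Cr n lam p' i) - (R p i - Cr n lam p i)) = 0"
    using sR[OF p(1)] sR[OF p(2)] sC[of p] sC[of p'] by (simp add: sum_subtractf)
  also have "(\<Sum>i=1..n. (R p' i - Cr n lam p' i) - (R p i - Cr n lam p i))
     = (\<Sum>i\<in>{1..<k}. (R p' i - Cr n lam p' i) - (R p i - Cr n lam p i)) + (\<Sum>i=k..n. (R p' i - Cr n lam p' i) - (R p i - Cr n lam p i))"
    using k by (intro split_sum) auto
  also have "(\<Sum>i\<in>{1..<k}. (R p' i - Cr n lam p' i) - (R p i - Cr n lam p i)) = 0"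
    using IH p by simp
  also have "(\<Sum>i=k..n. (R p' i - Cr n lam p' i) - (R p i - Cr n lam p i)) = (\<Sum>i=k..n. \<delta>)"
    using dl by simp
  finally have "real (card {k..n}) * \<delta> = 0" by simp
  moreover have "card {k..n} > 0" using k by auto
  ultimately have "\<delta> = 0" by simp
  then show ?thesis unfolding \<delta>_def by simp
qed


lemma forward:
  assumes n: "2 \<le> n" and rule: "is_rule n R"
    and SI: "scale_invariant n R" and DI: "downstream_impartial n R"
    and UI: "upstream_invariant n R" and ET: "equal_treatment_source n R"
  shows "compromise_rule n R"
proof -
  define d1 where "d1 = (\<lambda>i::nat. if i = 1 then 1 else 0 :: real)"
  have d1: "d1 \<in> dom_D n" unfolding d1_def dom_D_def using n by auto
  define lam where "lam = R d1 1"
  have alloc: "is_allocation n e (R e)" if "e \<in> dom_D n" for e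
    using rule that unfolding is_rule_def by blast
  have lam0: "0 \<le> lam"
  proof -
    have "\<forall>i\<in>{1..n}. 0 \<le> R d1 i" using alloc[OF d1] unfolding is_allocation_def by blast
    moreover have "(1::nat) \<in> {1..n}" using n by auto
    ultimately show ?thesis unfolding lam_def by blast
  qed
  have "(\<Sum>i=1..1. R d1 i) \<le> (\<Sum>i=1..1. d1 i)"
  proof -
    have "\<forall>k\<in>{1..n-1}. (\<Sum>i=1..k. R d1 i) \<le> (\<Sum>i=1..k. d1 i)"
      using alloc[OF d1] unfolding is_allocation_def by blast
    moreover have "(1::nat) \<in> {1..n-1}" using n by auto
    ultimately show ?thesis by blast
  qed
  then have lam1: "lam \<le> 1" unfolding lam_def d1_def by simp
  have ets: "R q (source n q) = lam * q (source n q)" if q: "q \<in> dom_D n" "has_source n q" for q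
  proof -
    define s where "s = source n q"
    define a where "a = q s"
    have a: "0 < a" unfolding a_def s_def using source_props[OF q(2,1)] by auto
    define q' where "q' = (\<lambda>i. a * d1 i)"
    have q'd: "q' \<in> dom_D n" unfolding q'_def using scale_dom[OF d1] a by simp
    have "has_source n q' \<and> source n q' = 1"
      by (rule source_eq) (use n a in \<open>auto simp: q'_def d1_def\<close>)
    moreover have "q' 1 = a" unfolding q'_def d1_def by simp
    ultimately have hs: "has_source n q'" "source n q' = 1" "q' (source n q') = q (source n q)"
      unfolding a_def s_def by simp_all
    have "R q (source n q) = R q' (source n q')"
    proof -
      have "\<forall>e\<in>dom_D n. \<forall>e'\<in>dom_D n. has_source n e \<and> has_source n e' \<and>
        e (source n e) = e' (source n e') \<longrightarrow> R e (source n e) = R e' (source n e')"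
        using ET unfolding equal_treatment_source_def .
      then have "has_source n q \<and> has_source n q' \<and> q (source n q) = q' (source n q') \<longrightarrow>
          R q (source n q) = R q' (source n q')"
        using q(1) q'd by blast
      then show ?thesis using q(2) hs(1,3) by simp
    qed
    then have "R q s = R q' 1" using hs(2) unfolding s_def by simp
    also have "R q' 1 = a * R d1 1"
    proof -
      have "\<forall>\<gamma>::real. 0 \<le> \<gamma> \<longrightarrow> (\<forall>k\<in>{1..n}. R (\<lambda>i. \<gamma> * d1 i) k = \<gamma> * R d1 k)"
        using SI d1 unfolding scale_invariant_def by blast
      moreover have "(1::nat) \<in> {1..n}" using n by simp
      ultimately show ?thesis using a unfolding q'_def by simp
    qed
    finally show ?thesis unfolding lam_def s_def a_def by simp
  qed
  have sR: "(\<Sum>i=1..n. R q i) = (\<Sum>i=1..n. q i)" if "q \<in> dom_D n" for q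
    using alloc[OF that] unfolding is_allocation_def by blast
  have main: "\<forall>e\<in>dom_D n. R e k = Cr n lam e k" if "k \<in> {1..n-1}" for k
    using that
  proof (induction k rule: less_induct)
    case (less k)
    have IH: "\<forall>j\<in>{1..<k}. \<forall>e\<in>dom_D n. R e j = Cr n lam e j"
      using less by auto
    show ?case
    proof
      fix e assume e: "e \<in> dom_D n"
      define c where "c = e k"
      have c0: "0 \<le> c" unfolding c_def using dom_nonneg[OF e] .
      define q where "q = (\<lambda>j. if j \<in> {k..n} then c else e j)"
      define q0 where "q0 = (\<lambda>j. if j \<in> {k..n} then c else (0::real))"
      define Q where "Q = (\<lambda>p. R p k - Cr n lam p k)"
      have qd: "q \<in> dom_D n" using e c0 less.prems unfolding q_def dom_D_def by auto
      have q0d: "q0 \<in> dom_D n" using c0 less.prems unfolding q0_def dom_D_def by auto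
      have kn: "k \<in> {1..n}" using less.prems by auto
      have "Q e = Q q"
      proof (rule chain[where S="{k+1..n}" and A="dom_D n" and n=n and Q=Q and p=e and p'=q])
        show "\<forall>j\<in>{1..n}. j \<notin> {k + 1..n} \<longrightarrow> e j = q j"
        proof -
          have "e j = q j" if "j \<in> {1..n}" "j \<notin> {k + 1..n}" for j
          proof -
            have "j \<le> k" using that by auto
            then show ?thesis unfolding q_def c_def by (cases "j = k") auto
          qed
          then show ?thesis by blast
        qed
        show "\<And>p p' x. p \<in> dom_D n \<Longrightarrow> p' \<in> dom_D n \<Longrightarrow> x \<in> {k + 1..n} \<Longrightarrow> p(x := p' x) \<in> dom_D n"
          unfolding dom_D_def by auto
        show "Q p = Q p'" if p: "p \<in> dom_D n" "p' \<in> dom_D n" "x \<in> {k + 1..n}"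
            "\<forall>j\<in>{1..n}. j \<noteq> x \<longrightarrow> p j = p' j" for p p' x
        proof -
          have xn: "x \<in> {1..n}" "k < x" using p(3) kn by auto
          have "R p k = R p' k"
          proof (cases "p x < p' x")
            case True
            moreover have "\<forall>e\<in>dom_D n. \<forall>e'\<in>dom_D n. \<forall>i\<in>{1..n}.
                 e i < e' i \<and> (\<forall>j\<in>{1..n}. j \<noteq> i \<longrightarrow> e j = e' j) \<longrightarrow>
                 (\<forall>k\<in>{1..n}. k < i \<longrightarrow> R e k = R e' k)" using UI unfolding upstream_invariant_def .
            ultimately have "\<forall>k\<in>{1..n}. k < x \<longrightarrow> R p k = R p' k"
              using p(1,2,4) xn(1) by blast
            then show ?thesis using kn xn by auto
          next
            case False
            show ?thesis
            proof (cases "p' x < p x")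
              case True
              have "\<forall>j\<in>{1..n}. j \<noteq> x \<longrightarrow> p' j = p j" using p by auto
              moreover have "\<forall>e\<in>dom_D n. \<forall>e'\<in>dom_D n. \<forall>i\<in>{1..n}.
                 e i < e' i \<and> (\<forall>j\<in>{1..n}. j \<noteq> i \<longrightarrow> e j = e' j) \<longrightarrow>
                 (\<forall>k\<in>{1..n}. k < i \<longrightarrow> R e k = R e' k)" using UI unfolding upstream_invariant_def .
              ultimately have "\<forall>k\<in>{1..n}. k < x \<longrightarrow> R p' k = R p k"
                using True p(1,2) xn(1) by blast
              then show ?thesis using kn xn by auto
            next
              case False2: False
              have "p x = p' x" using False False2 by simp
              then have "\<forall>j\<in>{1..n}. p j = p' j" using p(4) by metis
              then have "p = p'" using dom_ext[OF p(1,2)] by blast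
              then show ?thesis by simp
            qed
          qed
          moreover have "Cr n lam p k = Cr n lam p' k"
            using C_upstream[OF kn xn(2)] xn p(4) by auto
          ultimately show ?thesis unfolding Q_def by simp
        qed
      qed (use e qd in auto)
      also have "Q q = Q q0"
      proof (rule chain[where S="{1..<k}" and A="{p \<in> dom_D n. \<forall>j\<in>{k..n}. p j = c}" and n=n and Q=Q and p=q and p'=q0])
        show "\<forall>j\<in>{1..n}. j \<notin> {1..<k} \<longrightarrow> q j = q0 j"
          unfolding q_def q0_def by auto
        show "\<And>p p' x. p \<in> {p \<in> dom_D n. \<forall>j\<in>{k..n}. p j = c} \<Longrightarrow> p' \<in> {p \<in> dom_D n. \<forall>j\<in>{k..n}. p j = c} \<Longrightarrow> x \<in> {1..<k}
           \<Longrightarrow> p(x := p' x) \<in> {p \<in> dom_D n. \<forall>j\<in>{k..n}. p j = c}"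
          using kn unfolding dom_D_def by auto
        show "Q p = Q p'" if p: "p \<in> {p \<in> dom_D n. \<forall>j\<in>{k..n}. p j = c}" "p' \<in> {p \<in> dom_D n. \<forall>j\<in>{k..n}. p j = c}"
            "x \<in> {1..<k}" "\<forall>j\<in>{1..n}. j \<noteq> x \<longrightarrow> p j = p' j" for p p' x
        proof (cases "p x < p' x")
          case True
          then show ?thesis unfolding Q_def
            using step_lemma[OF n rule DI less.prems IH, of p p' c x] p by auto
        next
          case False
          show ?thesis
          proof (cases "p' x < p x")
            case True
            have "\<forall>j\<in>{1..n}. j \<noteq> x \<longrightarrow> p' j = p j" using p by auto
            then show ?thesis unfolding Q_def
              using step_lemma[OF n rule DI less.prems IH, of p' p c x] p True by auto
          next
            case False2: False
            have "p x = p' x" using False False2 by simp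
            then have "\<forall>j\<in>{1..n}. p j = p' j" using p(4) by metis
            then have "p = p'" using dom_ext[of p n p'] p(1,2) by blast
            then show ?thesis by simp
          qed
        qed
      qed (use qd q0d c_def kn in \<open>auto simp: q_def q0_def\<close>)
      also have "Q q0 = 0"
      proof (cases "c = 0")
        case True
        then have z: "q0 = (\<lambda>i. 0 * q0 i)" unfolding q0_def by auto
        have "R q0 k = 0"
        proof -
          have "\<forall>\<gamma>::real. 0 \<le> \<gamma> \<longrightarrow> (\<forall>k\<in>{1..n}. R (\<lambda>i. \<gamma> * q0 i) k = \<gamma> * R q0 k)"
            using SI q0d unfolding scale_invariant_def by blast
          then have "\<forall>k\<in>{1..n}. R (\<lambda>i. 0 * q0 i) k = 0 * R q0 k" by blast
          then have "R (\<lambda>i. 0 * q0 i) k = 0 * R q0 k" using kn by blast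
          then show ?thesis using z by (metis mult_zero_left)
        qed
        moreover have "Cr n lam q0 k = 0" using True
          unfolding Cr_def R_NT_def R_EFT_def q0_def by simp
        ultimately show ?thesis unfolding Q_def by simp
      next
        case False
        have "has_source n q0 \<and> source n q0 = k"
          by (rule source_eq) (use less.prems False c0 in \<open>auto simp: q0_def\<close>)
        then show ?thesis unfolding Q_def using ets[OF q0d] C_source[OF q0d] by auto
      qed
      finally show "R e k = Cr n lam e k" unfolding Q_def by simp
    qed
  qed
  have all: "R e i = Cr n lam e i" if e: "e \<in> dom_D n" and i: "i \<in> {1..n}" for e i
  proof (cases "i = n")
    case False
    then show ?thesis using main[of i] e i by auto
  next
    case True
    have s1: "(\<Sum>i=1..n. R e i) = (\<Sum>i=1..n. Cr n lam e i)"
      using sR[OF e] C_sum n by simp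
    have sp: "(\<Sum>i=1..n. f i) = (\<Sum>i=1..n-1. f i) + (f n :: real)" for f
      using n by (cases n) (auto simp: sum.cl_ivl_Suc)
    have "(\<Sum>i=1..n-1. R e i) = (\<Sum>i=1..n-1. Cr n lam e i)"
      using main e by (intro sum.cong) auto
    then show ?thesis using s1 sp[of "R e"] sp[of "Cr n lam e"] True by simp
  qed
  show ?thesis unfolding compromise_rule_def
    using lam0 lam1 all unfolding Cr_def by blast
qed


lemma backward:
  assumes n: "2 \<le> n" and cr: "compromise_rule n R"
  shows "scale_invariant n R \<and> downstream_impartial n R \<and> upstream_invariant n R
          \<and> equal_treatment_source n R"
proof -
  obtain lam where RC: "\<forall>e\<in>dom_D n. \<forall>i\<in>{1..n}. R e i = Cr n lam e i"
    using cr unfolding compromise_rule_def Cr_def by blast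
  have SI: "scale_invariant n R"
    unfolding scale_invariant_def
  proof (intro ballI allI impI)
    fix e and g :: real and k assume e: "e \<in> dom_D n" and g: "0 \<le> g" and k: "k \<in> {1..n}"
    have "(\<lambda>i. g * e i) \<in> dom_D n" using scale_dom[OF e g] .
    then have "R (\<lambda>i. g * e i) k = Cr n lam (\<lambda>i. g * e i) k" using RC k by blast
    also have "\<dots> = g * Cr n lam e k" by (rule C_scale)
    also have "\<dots> = g * R e k" using RC e k by simp
    finally show "R (\<lambda>i. g * e i) k = g * R e k" .
  qed
  have UI: "upstream_invariant n R"
    unfolding upstream_invariant_def
  proof (intro ballI impI allI)
    fix e e' i k assume e: "e \<in> dom_D n" "e' \<in> dom_D n" and i: "i \<in> {1..n}"
      and h: "e i < e' i \<and> (\<forall>j\<in>{1..n}. j \<noteq> i \<longrightarrow> e j = e' j)" and k: "k \<in> {1..n}" "k < i"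
    have "Cr n lam e k = Cr n lam e' k"
      using C_upstream[OF k(1) k(2)] i h by auto
    then show "R e k = R e' k" using RC e k by simp
  qed
  have DI: "downstream_impartial n R"
    unfolding downstream_impartial_def
  proof (intro ballI impI allI)
    fix e e' i k l assume e: "e \<in> dom_D n" "e' \<in> dom_D n" and i: "i \<in> {1..n}"
      and h: "e i < e' i \<and> (\<forall>j\<in>{1..n}. j \<noteq> i \<longrightarrow> e j = e' j)" and k: "k \<in> {1..n}" "l \<in> {1..n}"
      and kl: "i < k \<and> i < l \<and> e k = e l"
    have "Cr n lam e' k - Cr n lam e k = Cr n lam e' l - Cr n lam e l"
      using C_DI[OF i k(1), of e e' lam] C_DI[OF i k(2), of e e' lam] h kl by simp
    then show "R e' k - R e k = R e' l - R e l" using RC e k by simp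
  qed
  have ET: "equal_treatment_source n R"
    unfolding equal_treatment_source_def
  proof (intro ballI impI)
    fix e e' assume e: "e \<in> dom_D n" "e' \<in> dom_D n"
      and h: "has_source n e \<and> has_source n e' \<and> e (source n e) = e' (source n e')"
    have s: "source n e \<in> {1..n}" "source n e' \<in> {1..n}"
      using source_props[of n e] source_props[of n e'] e h by auto
    have "R e (source n e) = lam * e (source n e)"
      using RC e s C_source[of e n lam] h by simp
    moreover have "R e' (source n e') = lam * e' (source n e')"
      using RC e s C_source[of e' n lam] h by simp
    ultimately show "R e (source n e) = R e' (source n e')" using h by simp
  qed
  show ?thesis using SI DI UI ET by blast
qed

theorem theorem2:
  fixes n :: nat and R :: "(nat \<Rightarrow> real) \<Rightarrow> (nat \<Rightarrow> real)"
  assumes "2 \<le> n" and "is_rule n R"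
  shows "(scale_invariant n R \<and> downstream_impartial n R \<and> upstream_invariant n R
          \<and> equal_treatment_source n R) \<longleftrightarrow> compromise_rule n R"
  using forward[OF assms] backward[OF assms(1)] by blast

end
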